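(* Let $m,n\in\mathbf{N}$ with $m\ge n$, and let $\mathcal{P}$ be a closed set family of shape $(m^n)$. Then every $X\in\mathcal{P}$ satisfies $X\supseteq\{1,2,\dots,m-n+1\}$.
   Context: Majorization: for $m$-subsets $X=\{x_1<\dots<x_m\}$, $Y=\{y_1<\dots<y_m\}$ of $\mathbf{N}=\{1,2,\dots\}$, $X\preceq Y$ if $x_i\le y_i$ for all $i$. A set family of shape $(m^n)$ is a collection of $n$ distinct $m$-subsets of $\mathbf{N}$; it is closed if whenever $Y$ belongs to it and $X\preceq Y$, then $X$ belongs to it. *)

theory Defs
  imports Main
begin

definition msubset :: "nat \<Rightarrow> nat set \<Rightarrow> bool" where
  "msubset m X \<longleftrightarrow> finite X \<and> card X = m \<and> 0 \<notin> X"

definition majorized :: "nat set \<Rightarrow> nat set \<Rightarrow> bool" where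
  "majorized X Y \<longleftrightarrow> finite X \<and> finite Y \<and> card X = card Y \<and>
     (\<forall>i < card X. sorted_list_of_set X ! i \<le> sorted_list_of_set Y ! i)"

definition set_family :: "nat \<Rightarrow> nat \<Rightarrow> nat set set \<Rightarrow> bool" where
  "set_family m n P \<longleftrightarrow> finite P \<and> card P = n \<and> (\<forall>X\<in>P. msubset m X)"

definition closed_family :: "nat \<Rightarrow> nat \<Rightarrow> nat set set \<Rightarrow> bool" where
  "closed_family m n P \<longleftrightarrow> set_family m n P \<and>
     (\<forall>X Y. Y \<in> P \<longrightarrow> msubset m X \<longrightarrow> majorized X Y \<longrightarrow> X \<in> P)"

end

theory Submission
  imports Defs
begin

lemma Y_sorted:
  assumes "1 \<le> j" "j \<le> m + 1"
  shows "sorted_list_of_set ({1..<m+2} - {j}) = [1..<j] @ [Suc j..<m+2]"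
proof -
  have s: "set ([1..<j] @ [Suc j..<m+2]) = {1..<m+2} - {j}" using assms by auto
  have "sorted ([1..<j] @ [Suc j..<m+2])" by (auto simp: sorted_append)
  moreover have "distinct ([1..<j] @ [Suc j..<m+2])" by auto
  ultimately show ?thesis
    by (metis s sorted_list_of_set_sort_remdups distinct_remdups_id sorted_sort_id)
qed

lemma Y_nth:
  assumes "1 \<le> j" "j \<le> m + 1" "i < m"
  shows "sorted_list_of_set ({1..<m+2} - {j}) ! i = (if i < j - 1 then i + 1 else i + 2)"
proof -
  have "([1..<j] @ [Suc j..<m+2]) ! i = (if i < j - 1 then i + 1 else i + 2)"
    using assms by (auto simp: nth_append)
  then show ?thesis using Y_sorted[OF assms(1,2)] by simp
qed

lemma X_lower:
  fixes xs :: "nat list"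
  assumes "sorted_wrt (<) xs" "0 \<notin> set xs" "i < length xs"
  shows "i + 1 \<le> xs ! i"
  using assms
proof (induction i)
  case 0 then show ?case by (cases xs) auto
next
  case (Suc i)
  then have "xs ! i < xs ! Suc i" using sorted_wrt_nth_less by fastforce
  with Suc show ?case by auto
qed

lemma X_lower2:
  fixes xs :: "nat list"
  assumes "sorted_wrt (<) xs" "0 \<notin> set xs" "i < length xs" "k \<notin> set xs" "k - 1 \<le> i" "1 \<le> k"
  shows "i + 2 \<le> xs ! i"
  using assms
proof (induction i)
  case 0
  have "1 \<le> xs ! 0" using X_lower[OF 0(1,2)] 0 by force
  moreover have "xs ! 0 \<noteq> k" using 0 nth_mem by metis
  ultimately show ?case using 0 by auto
next
  case (Suc i)
  show ?case
  proof (cases "k - 1 \<le> i")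
    case True
    with Suc have "i + 2 \<le> xs ! i" by auto
    moreover have "xs ! i < xs ! Suc i" using Suc sorted_wrt_nth_less by fastforce
    ultimately show ?thesis by auto
  next
    case False
    then have k: "k = Suc i + 1" using Suc by auto
    have "Suc i + 1 \<le> xs ! Suc i" using X_lower Suc by blast
    moreover have "xs ! Suc i \<noteq> k" using Suc nth_mem by metis
    ultimately show ?thesis using k by auto
  qed
qed

theorem lemma5p4:
  fixes m n :: nat and P :: "nat set set"
  assumes "1 \<le> n" and "n \<le> m"
    and "closed_family m n P"
  shows "\<forall>X\<in>P. {1..m - n + 1} \<subseteq> X"
proof (intro ballI subsetI, rule ccontr)
  fix X k assume XP: "X \<in> P" and kr: "k \<in> {1..m - n + 1}" and kX: "k \<notin> X"
  from assms(3) have fP: "finite P" and cP: "card P = n"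
    and msP: "\<forall>X\<in>P. msubset m X"
    and cl: "\<And>X Y. Y \<in> P \<Longrightarrow> msubset m X \<Longrightarrow> majorized X Y \<Longrightarrow> X \<in> P"
    using assms(3) unfolding closed_family_def set_family_def by blast+
  from msP XP have fX: "finite X" and cX: "card X = m" and X0: "0 \<notin> X"
    unfolding msubset_def by blast+
  define xs where "xs = sorted_list_of_set X"
  have xs1: "sorted_wrt (<) xs" using xs_def by simp
  have xs2: "0 \<notin> set xs" "k \<notin> set xs" using X0 kX fX xs_def by auto
  have xs3: "length xs = m" using xs_def cX by simp
  define Y where "Y j = {1..<m+2} - {j}" for j :: nat
  have Yin: "Y j \<in> P" if j: "j \<in> {k..m+1}" for j
  proof (rule cl[OF XP])
    have j1: "1 \<le> j" "j \<le> m+1" using j kr by auto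
    have cY: "card (Y j) = m" using j1 by (simp add: Y_def)
    show "msubset m (Y j)" unfolding msubset_def using cY by (auto simp: Y_def)
    show "majorized (Y j) X" unfolding majorized_def
    proof (intro conjI allI impI)
      show "finite (Y j)" "finite X" by (auto simp: Y_def fX)
      show "card (Y j) = card X" using cY cX by simp
      fix i assume "i < card (Y j)"
      then have i: "i < m" using cY by simp
      have yn: "sorted_list_of_set (Y j) ! i = (if i < j - 1 then i + 1 else i + 2)"
        unfolding Y_def by (rule Y_nth[OF j1 i])
      have xl: "i + 1 \<le> sorted_list_of_set X ! i"
        using X_lower[OF xs1 xs2(1)] i xs3 unfolding xs_def by blast
      show "sorted_list_of_set (Y j) ! i \<le> sorted_list_of_set X ! i"
      proof (cases "i < j - 1")
        case True
        then show ?thesis using yn xl by simp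
      next
        case False
        then have ki: "k - 1 \<le> i" using j by auto
        have "i + 2 \<le> sorted_list_of_set X ! i"
          using X_lower2[OF xs1 xs2(1) _ xs2(2) ki] i xs3 kr unfolding xs_def by simp
        then show ?thesis using yn False by simp
      qed
    qed
  qed
  have inj: "inj_on Y {k..m+1}"
  proof (rule inj_onI)
    fix a b assume a: "a \<in> {k..m+1}" and b: "b \<in> {k..m+1}" and e: "Y a = Y b"
    show "a = b"
    proof (rule ccontr)
      assume "a \<noteq> b"
      then have "b \<in> Y a" using b kr unfolding Y_def by auto
      moreover have "b \<notin> Y b" unfolding Y_def by blast
      ultimately show False using e by simp
    qed
  qed
  have "Y ` {k..m+1} \<subseteq> P" using Yin by auto
  then have c1: "card (Y ` {k..m+1}) \<le> n" using card_mono[OF fP] cP by metis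
  have "card (Y ` {k..m+1}) = card {k..m+1}" by (rule card_image[OF inj])
  also have "\<dots> = m + 2 - k" by simp
  finally have c2: "card (Y ` {k..m+1}) = m + 2 - k" .
  have "k \<le> m - n + 1" using kr by simp
  then show False using c1 c2 assms(1,2) by linarith
qed

end
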